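(* Let $(S,+)$ be a commutative cancellative semigroup with no identity element such that its difference group $S-S$ carries a multiplication making it an integral domain. Then $\mathcal{J}_p=\{p\in\beta S:\text{every }X\in p\text{ is a }J_p\text{-set in }S\}$ is a compact (two-sided) ideal of $(\beta S,+)$.
   Context: $S-S=\{a-b:a,b\in S\}$ is the difference group of $S$ (with $(a-b)+b=a$), containing $S$. $\mathbb{P}$ denotes the set of integral polynomials on $S-S$: polynomial functions $S-S\to S-S$ in one variable with coefficients in $S-S$ and zero constant term. $\mathcal{P}_f(X)$ denotes the set of nonempty finite subsets of $X$, ${}^{\mathbb{N}}S$ the set of sequences $g:\mathbb{N}\to S$, $\mathbb{N}=\{1,2,\dots\}$. For $R\in\mathcal{P}_f(\mathbb{P})$, $L\in\mathcal{P}_f({}^{\mathbb{N}}S)$, $a\in S$, $H\in\mathcal{P}_f(\mathbb{N})$, let $S_{R,L}(a,H)=\{a+f(\sum_{t\in H}g(t)): f\in R, g\in L\}$. $A\subseteq S$ is a $J_p$-set if for every $R\in\mathcal{P}_f(\mathbb{P})$ and $L\in\mathcal{P}_f({}^{\mathbb{N}}S)$ there are $a\in S$, $H\in\mathcal{P}_f(\mathbb{N})$ with $S_{R,L}(a,H)\subseteq A$. $\beta S$ is the Stone–Čech compactification of discrete $S$ (ultrafilters on $S$), with basic open sets $\overline{A}=\{p: A\in p\}$ and operation extended by: $A\in p+q$ iff $\{x\in S: -x+A\in q\}\in p$, where $-x+A=\{s: x+s\in A\}$. An ideal is a subset $I$ with $p+q,q+p\in I$ for all $p\in I$, $q\in\beta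 S$. *)

theory Defs
  imports "HOL-Analysis.Analysis" "HOL-Computational_Algebra.Polynomial"
begin

text \<open>The semigroup S is represented as a subset of an integral domain 'a which is
  its difference group S - S.\<close>

definition diff_set :: "'a::ab_group_add set \<Rightarrow> 'a set" where
  "diff_set S = {a - b | a b. a \<in> S \<and> b \<in> S}"

definition integral_polys :: "'a::idom poly set" where
  "integral_polys = {f. coeff f 0 = 0}"

definition seqs_in :: "'a set \<Rightarrow> (nat \<Rightarrow> 'a) set" where
  "seqs_in S = {g. \<forall>t\<ge>1. g t \<in> S}"

definition SRL :: "'a::idom poly set \<Rightarrow> (nat \<Rightarrow> 'a) set \<Rightarrow> 'a \<Rightarrow> nat set \<Rightarrow> 'a set" where
  "SRL R L a H = {a + poly f (\<Sum>t\<in>H. g t) | f g. f \<in> R \<and> g \<in> L}"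

definition Jp_set :: "'a::idom set \<Rightarrow> 'a set \<Rightarrow> bool" where
  "Jp_set S A \<longleftrightarrow> A \<subseteq> S \<and>
     (\<forall>R L. finite R \<and> R \<noteq> {} \<and> R \<subseteq> integral_polys \<and>
            finite L \<and> L \<noteq> {} \<and> L \<subseteq> seqs_in S \<longrightarrow>
        (\<exists>a\<in>S. \<exists>H. finite H \<and> H \<noteq> {} \<and> H \<subseteq> {1..} \<and> SRL R L a H \<subseteq> A))"

definition ultrafilter_on :: "'a set \<Rightarrow> 'a set set \<Rightarrow> bool" where
  "ultrafilter_on S p \<longleftrightarrow> (\<forall>A\<in>p. A \<subseteq> S) \<and> S \<in> p \<and> {} \<notin> p \<and>
     (\<forall>A B. A \<in> p \<and> B \<in> p \<longrightarrow> A \<inter> B \<in> p) \<and>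
     (\<forall>A B. A \<in> p \<and> A \<subseteq> B \<and> B \<subseteq> S \<longrightarrow> B \<in> p) \<and>
     (\<forall>A. A \<subseteq> S \<longrightarrow> A \<in> p \<or> S - A \<in> p)"

definition betaS :: "'a set \<Rightarrow> 'a set set set" where
  "betaS S = {p. ultrafilter_on S p}"

definition beta_topology :: "'a set \<Rightarrow> 'a set set topology" where
  "beta_topology S = topology_generated_by {{p \<in> betaS S. A \<in> p} | A. A \<subseteq> S}"

text \<open>-x + A = {s \<in> S. x + s \<in> A}; A \<in> p + q iff {x. -x + A \<in> q} \<in> p.\<close>
definition beta_plus :: "'a::plus set \<Rightarrow> 'a set set \<Rightarrow> 'a set set \<Rightarrow> 'a set set" where
  "beta_plus S p q = {A. A \<subseteq> S \<and> {x \<in> S. {s \<in> S. x + s \<in> A} \<in> q} \<in> p}"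

definition two_sided_ideal :: "'a::plus set \<Rightarrow> 'a set set set \<Rightarrow> bool" where
  "two_sided_ideal S I \<longleftrightarrow> I \<subseteq> betaS S \<and>
     (\<forall>p\<in>I. \<forall>q\<in>betaS S. beta_plus S p q \<in> I \<and> beta_plus S q p \<in> I)"

definition Jp_ultra :: "'a::idom set \<Rightarrow> 'a set set set" where
  "Jp_ultra S = {p \<in> betaS S. \<forall>X\<in>p. Jp_set S X}"

end

theory Submission
  imports Defs
begin

definition fipS :: "'a set \<Rightarrow> 'a set set \<Rightarrow> bool" where
  "fipS S G \<longleftrightarrow> (\<forall>E. finite E \<and> E \<subseteq> G \<longrightarrow> S \<inter> \<Inter>E \<noteq> {})"


lemma ultrafilter_exists:
  assumes G: "G \<subseteq> Pow S" "fipS S G"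
  shows "\<exists>q. ultrafilter_on S q \<and> G \<subseteq> q"
proof -
  let ?A = "{F. G \<subseteq> F \<and> F \<subseteq> Pow S \<and> fipS S F}"
  have "\<forall>C\<in>chains ?A. \<exists>U\<in>?A. \<forall>X\<in>C. X \<subseteq> U"
  proof
    fix C assume C: "C \<in> chains ?A"
    show "\<exists>U\<in>?A. \<forall>X\<in>C. X \<subseteq> U"
    proof (cases "C = {}")
      case True then show ?thesis using G by auto
    next
      case False
      have "\<Union>C \<in> ?A"
      proof -
        have "fipS S (\<Union>C)" unfolding fipS_def
        proof (intro allI impI)
          fix E assume E: "finite E \<and> E \<subseteq> \<Union>C"
          have ch: "subset.chain ?A C" using C by (simp add: chains_alt_def)
          obtain B where B: "B \<in> C" "E \<subseteq> B"
            using finite_subset_Union_chain[OF _ _ False ch, of E] E by blast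
          have "fipS S B" using B(1) C unfolding chains_def by blast
          then show "S \<inter> \<Inter>E \<noteq> {}" using B(2) E unfolding fipS_def by blast
        qed
        moreover have CA: "C \<subseteq> ?A" using C unfolding chains_def by simp
        moreover obtain c where c: "c \<in> C" using False by blast
        have "G \<subseteq> c" using CA c by auto
        then have "G \<subseteq> \<Union>C" using c by auto
        moreover have "\<Union>C \<subseteq> Pow S" using CA by auto
        ultimately show ?thesis by simp
      qed
      moreover have "\<forall>X\<in>C. X \<subseteq> \<Union>C" by auto
      ultimately show ?thesis by (rule bexI[rotated])
    qed
  qed
  from Zorn_Lemma2[OF this] obtain M where M: "M \<in> ?A" and maxl: "\<forall>X\<in>?A. M \<subseteq> X \<longrightarrow> X = M" by blast
  have MP: "M \<subseteq> Pow S" "fipS S M" "G \<subseteq> M" using M by auto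
  have addin: "X \<in> M" if "X \<subseteq> S" "\<forall>E. finite E \<and> E \<subseteq> M \<longrightarrow> S \<inter> \<Inter>E \<inter> X \<noteq> {}" for X
  proof -
    have "fipS S (insert X M)" unfolding fipS_def
    proof (intro allI impI)
      fix E assume E: "finite E \<and> E \<subseteq> insert X M"
      then have "finite (E - {X}) \<and> E - {X} \<subseteq> M" by auto
      then have "S \<inter> \<Inter>(E - {X}) \<inter> X \<noteq> {}" by (rule that(2)[rule_format])
      moreover have "S \<inter> \<Inter>(E - {X}) \<inter> X \<subseteq> S \<inter> \<Inter>E" by auto
      ultimately show "S \<inter> \<Inter>E \<noteq> {}" by (metis subset_empty)
    qed
    then have "insert X M \<in> ?A" using MP that by auto
    moreover have "M \<subseteq> insert X M" by auto
    ultimately have "insert X M = M" using maxl by simp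
    then show ?thesis by auto
  qed
  have fipM: "S \<inter> \<Inter>E \<noteq> {}" if "finite E" "E \<subseteq> M" for E
  proof -
    have "\<forall>E. finite E \<and> E \<subseteq> M \<longrightarrow> S \<inter> \<Inter>E \<noteq> {}" using MP(2) unfolding fipS_def .
    then show ?thesis using that by simp
  qed
  have "ultrafilter_on S M" unfolding ultrafilter_on_def
  proof (intro conjI allI impI ballI)
    show "\<And>A. A \<in> M \<Longrightarrow> A \<subseteq> S" using MP by auto
    show "S \<in> M" by (rule addin) (use fipM in auto)
    show "{} \<notin> M" using fipM[of "{{}}"] by auto
    fix A B
    show "A \<in> M \<and> B \<in> M \<Longrightarrow> A \<inter> B \<in> M"
    proof (rule addin)
      assume AB: "A \<in> M \<and> B \<in> M"
      then show "A \<inter> B \<subseteq> S" using MP by auto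
      show "\<forall>E. finite E \<and> E \<subseteq> M \<longrightarrow> S \<inter> \<Inter>E \<inter> (A \<inter> B) \<noteq> {}"
      proof (intro allI impI)
        fix E assume "finite E \<and> E \<subseteq> M"
        then have "S \<inter> \<Inter>(insert A (insert B E)) \<noteq> {}" using AB by (intro fipM) auto
        then show "S \<inter> \<Inter>E \<inter> (A \<inter> B) \<noteq> {}" by auto
      qed
    qed
    show "A \<in> M \<and> A \<subseteq> B \<and> B \<subseteq> S \<Longrightarrow> B \<in> M"
    proof (rule addin)
      assume AB: "A \<in> M \<and> A \<subseteq> B \<and> B \<subseteq> S"
      then show "B \<subseteq> S" by auto
      show "\<forall>E. finite E \<and> E \<subseteq> M \<longrightarrow> S \<inter> \<Inter>E \<inter> B \<noteq> {}"
      proof (intro allI impI)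
        fix E assume "finite E \<and> E \<subseteq> M"
        then have "S \<inter> \<Inter>(insert A E) \<noteq> {}" using AB by (intro fipM) auto
        then show "S \<inter> \<Inter>E \<inter> B \<noteq> {}" using AB by auto
      qed
    qed
  next
    fix A assume AS: "A \<subseteq> S"
    show "A \<in> M \<or> S - A \<in> M"
    proof (rule ccontr)
      assume n: "\<not> (A \<in> M \<or> S - A \<in> M)"
      have "\<not> (\<forall>E. finite E \<and> E \<subseteq> M \<longrightarrow> S \<inter> \<Inter>E \<inter> A \<noteq> {})" using n addin[OF AS] by metis
      then obtain E1 where E1: "finite E1" "E1 \<subseteq> M" "S \<inter> \<Inter>E1 \<inter> A = {}" by auto
      have "S - A \<subseteq> S" by auto
      then have "\<not> (\<forall>E. finite E \<and> E \<subseteq> M \<longrightarrow> S \<inter> \<Inter>E \<inter> (S - A) \<noteq> {})" using n addin[of "S - A"] by metis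
      then obtain E2 where E2: "finite E2" "E2 \<subseteq> M" "S \<inter> \<Inter>E2 \<inter> (S - A) = {}" by auto
      have "S \<inter> \<Inter>(E1 \<union> E2) \<noteq> {}" using E1 E2 by (intro fipM) auto
      moreover have "S \<inter> \<Inter>(E1 \<union> E2) = {}" using E1(3) E2(3) by auto
      ultimately show False by simp
    qed
  qed
  then show ?thesis using MP(3) by auto
qed


lemma uf_all:
  assumes "ultrafilter_on S p"
  shows "(\<forall>A\<in>p. A \<subseteq> S) \<and> S \<in> p \<and> {} \<notin> p \<and>
     (\<forall>A B. A \<in> p \<and> B \<in> p \<longrightarrow> A \<inter> B \<in> p) \<and>
     (\<forall>A B. A \<in> p \<and> A \<subseteq> B \<and> B \<subseteq> S \<longrightarrow> B \<in> p) \<and>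
     (\<forall>A. A \<subseteq> S \<longrightarrow> A \<in> p \<or> S - A \<in> p)"
  using assms unfolding ultrafilter_on_def .

lemma uf_sub: "ultrafilter_on S p \<Longrightarrow> A \<in> p \<Longrightarrow> A \<subseteq> S"
  using conjunct1[OF uf_all] by (rule bspec)
lemma uf_S: "ultrafilter_on S p \<Longrightarrow> S \<in> p"
  using conjunct1[OF conjunct2[OF uf_all]] .
lemma uf_empty: "ultrafilter_on S p \<Longrightarrow> {} \<notin> p"
  using conjunct1[OF conjunct2[OF conjunct2[OF uf_all]]] .
lemma uf_int:
  assumes "ultrafilter_on S p" "A \<in> p" "B \<in> p"
  shows "A \<inter> B \<in> p"
proof -
  have "\<forall>A B. A \<in> p \<and> B \<in> p \<longrightarrow> A \<inter> B \<in> p"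
    using conjunct1[OF conjunct2[OF conjunct2[OF conjunct2[OF uf_all[OF assms(1)]]]]] .
  from this[rule_format, OF conjI[OF assms(2,3)]] show ?thesis .
qed

lemma uf_mono:
  assumes "ultrafilter_on S p" "A \<in> p" "A \<subseteq> B" "B \<subseteq> S"
  shows "B \<in> p"
proof -
  have "\<forall>A B. A \<in> p \<and> A \<subseteq> B \<and> B \<subseteq> S \<longrightarrow> B \<in> p"
    using conjunct1[OF conjunct2[OF conjunct2[OF conjunct2[OF conjunct2[OF uf_all[OF assms(1)]]]]]] .
  from this[rule_format, OF conjI[OF assms(2) conjI[OF assms(3,4)]]] show ?thesis .
qed

lemma uf_compl0: "ultrafilter_on S p \<Longrightarrow> A \<subseteq> S \<Longrightarrow> A \<in> p \<or> S - A \<in> p"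
  using conjunct2[OF conjunct2[OF conjunct2[OF conjunct2[OF conjunct2[OF uf_all]]]], rule_format] .

lemma uf_ne:
  assumes "ultrafilter_on S p" "A \<in> p"
  shows "A \<noteq> {}"
proof
  assume "A = {}"
  with assms(2) have "{} \<in> p" by simp
  with uf_empty[OF assms(1)] show False by simp
qed

lemma uf_compl:
  assumes "ultrafilter_on S p" "A \<subseteq> S" "A \<notin> p"
  shows "S - A \<in> p"
  using uf_compl0[OF assms(1,2)] assms(3) by simp

lemma uf_intro:
  assumes a1: "\<And>A. A \<in> p \<Longrightarrow> A \<subseteq> S" and a2: "S \<in> p" and a3: "{} \<notin> p"
    and a4: "\<And>A B. A \<in> p \<Longrightarrow> B \<in> p \<Longrightarrow> A \<inter> B \<in> p"
    and a5: "\<And>A B. A \<in> p \<Longrightarrow> A \<subseteq> B \<Longrightarrow> B \<subseteq> S \<Longrightarrow> B \<in> p"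
    and a6: "\<And>A. A \<subseteq> S \<Longrightarrow> A \<in> p \<or> S - A \<in> p"
  shows "ultrafilter_on S p"
  unfolding ultrafilter_on_def
proof (intro conjI ballI allI impI)
  show "\<And>A. A \<in> p \<Longrightarrow> A \<subseteq> S" by (rule a1)
  show "S \<in> p" by (rule a2)
  show "{} \<notin> p" by (rule a3)
  fix A B
  show "A \<in> p \<and> B \<in> p \<Longrightarrow> A \<inter> B \<in> p" using a4 by (elim conjE)
  show "A \<in> p \<and> A \<subseteq> B \<and> B \<subseteq> S \<Longrightarrow> B \<in> p" using a5 by (elim conjE)
next
  fix A show "A \<subseteq> S \<Longrightarrow> A \<in> p \<or> S - A \<in> p" by (rule a6)
qed

lemma Jp_setD:
  assumes "Jp_set S A" "finite R \<and> R \<noteq> {} \<and> R \<subseteq> integral_polys \<and> finite L \<and> L \<noteq> {} \<and> L \<subseteq> seqs_in S"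
  shows "\<exists>a\<in>S. \<exists>H. finite H \<and> H \<noteq> {} \<and> H \<subseteq> {1..} \<and> SRL R L a H \<subseteq> A"
proof -
  have "\<forall>R L. finite R \<and> R \<noteq> {} \<and> R \<subseteq> integral_polys \<and> finite L \<and> L \<noteq> {} \<and> L \<subseteq> seqs_in S \<longrightarrow>
        (\<exists>a\<in>S. \<exists>H. finite H \<and> H \<noteq> {} \<and> H \<subseteq> {1..} \<and> SRL R L a H \<subseteq> A)"
    using assms(1) unfolding Jp_set_def by (rule conjunct2)
  from this[rule_format, OF assms(2)] show ?thesis .
qed

lemma uf_inter_finite:
  assumes p: "ultrafilter_on S p" and E: "finite E" "E \<subseteq> p"
  shows "S \<inter> \<Inter>E \<in> p"
  using E
proof (induction E rule: finite_induct)
  case empty then show ?case using uf_S[OF p] by simp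
next
  case (insert x F)
  have xF: "x \<in> p" "F \<subseteq> p" using insert.prems by simp_all
  have "S \<inter> \<Inter>F \<in> p" using xF(2) by (rule insert.IH)
  then have m: "x \<inter> (S \<inter> \<Inter>F) \<in> p" by (rule uf_int[OF p xF(1)])
  have eq: "S \<inter> \<Inter>(insert x F) = x \<inter> (S \<inter> \<Inter>F)" by blast
  show ?case by (simp only: eq m)
qed

definition basic_prop :: "'a set \<Rightarrow> 'a set set set \<Rightarrow> bool" where
  "basic_prop S u \<longleftrightarrow> u \<subseteq> betaS S \<and> (\<forall>p\<in>u. \<exists>A. A \<subseteq> S \<and> A \<in> p \<and> {p \<in> betaS S. A \<in> p} \<subseteq> u)"

lemma basic_propI:
  assumes "u \<subseteq> betaS S" "\<And>p. p \<in> u \<Longrightarrow> \<exists>A. A \<subseteq> S \<and> A \<in> p \<and> {p \<in> betaS S. A \<in> p} \<subseteq> u"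
  shows "basic_prop S u"
  using assms unfolding basic_prop_def by simp

lemma basic_propD1: "basic_prop S u \<Longrightarrow> u \<subseteq> betaS S"
  unfolding basic_prop_def by simp

lemma basic_propD2:
  assumes "basic_prop S u" "p \<in> u"
  obtains A where "A \<subseteq> S" "A \<in> p" "{p \<in> betaS S. A \<in> p} \<subseteq> u"
proof -
  have "\<forall>p\<in>u. \<exists>A. A \<subseteq> S \<and> A \<in> p \<and> {p \<in> betaS S. A \<in> p} \<subseteq> u"
    using assms(1) unfolding basic_prop_def by (rule conjunct2)
  then have "\<exists>A. A \<subseteq> S \<and> A \<in> p \<and> {p \<in> betaS S. A \<in> p} \<subseteq> u" using assms(2) by (rule bspec)
  then obtain A where "A \<subseteq> S \<and> A \<in> p \<and> {p \<in> betaS S. A \<in> p} \<subseteq> u" by (rule exE)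
  then have "A \<subseteq> S" "A \<in> p" "{p \<in> betaS S. A \<in> p} \<subseteq> u" by simp_all
  then show thesis by (rule that)
qed

lemma open_basic:
  assumes "generate_topology_on {{p \<in> betaS S. A \<in> p} | A. A \<subseteq> S} u"
  shows "basic_prop S u"
  using assms
proof (induction rule: generate_topology_on.induct)
  case Empty then show ?case by (simp add: basic_prop_def)
next
  case (Int a b)
  show ?case
  proof (rule basic_propI)
    have "a \<subseteq> betaS S" by (rule basic_propD1[OF Int.IH(1)])
    then show "a \<inter> b \<subseteq> betaS S" by (rule le_infI1)
    fix p assume p: "p \<in> a \<inter> b"
    have pa: "p \<in> a" and pb': "p \<in> b" using p by simp_all
    obtain A where A: "A \<subseteq> S" "A \<in> p" "{p \<in> betaS S. A \<in> p} \<subseteq> a" using basic_propD2[OF Int.IH(1) pa] .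
    obtain B where B: "B \<subseteq> S" "B \<in> p" "{p \<in> betaS S. B \<in> p} \<subseteq> b" using basic_propD2[OF Int.IH(2) pb'] .
    have "p \<in> betaS S" using \<open>a \<subseteq> betaS S\<close> pa by (rule subsetD)
    then have pb: "ultrafilter_on S p" unfolding betaS_def by simp
    have AB1: "A \<inter> B \<in> p" using uf_int[OF pb A(2) B(2)] .
    have AB2: "{p \<in> betaS S. A \<inter> B \<in> p} \<subseteq> a \<inter> b"
    proof
      fix q assume q: "q \<in> {p \<in> betaS S. A \<inter> B \<in> p}"
      then have qb: "q \<in> betaS S" and qAB: "A \<inter> B \<in> q" by simp_all
      then have qu: "ultrafilter_on S q" unfolding betaS_def by simp
      have "A \<in> q" using uf_mono[OF qu qAB _ A(1)] by simp
      then have "q \<in> a" using A(3) qb by blast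
      have "B \<in> q" using uf_mono[OF qu qAB _ B(1)] by simp
      then have "q \<in> b" using B(3) qb by blast
      then show "q \<in> a \<inter> b" using \<open>q \<in> a\<close> by simp
    qed
    have AB0: "A \<inter> B \<subseteq> S" using A(1) by (rule le_infI1)
    show "\<exists>C. C \<subseteq> S \<and> C \<in> p \<and> {p \<in> betaS S. C \<in> p} \<subseteq> a \<inter> b"
      by (rule exI[of _ "A \<inter> B"]) (simp only: AB0 AB1 AB2 simp_thms)
  qed
next
  case (UN K)
  show ?case
  proof (rule basic_propI)
    show "\<Union>K \<subseteq> betaS S"
    proof
      fix x assume "x \<in> \<Union>K"
      then obtain k where k: "k \<in> K" "x \<in> k" by (rule UnionE)
      show "x \<in> betaS S" using basic_propD1[OF UN.IH[OF k(1)]] k(2) by (rule subsetD)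
    qed
    fix p assume "p \<in> \<Union>K"
    then obtain k where k: "k \<in> K" "p \<in> k" by (rule UnionE)
    obtain A where A: "A \<subseteq> S" "A \<in> p" "{p \<in> betaS S. A \<in> p} \<subseteq> k" using basic_propD2[OF UN.IH[OF k(1)] k(2)] .
    have "k \<subseteq> \<Union>K" using k(1) by (rule Union_upper)
    with A(3) have A3: "{p \<in> betaS S. A \<in> p} \<subseteq> \<Union>K" by (rule order_trans)
    show "\<exists>A. A \<subseteq> S \<and> A \<in> p \<and> {p \<in> betaS S. A \<in> p} \<subseteq> \<Union>K"
      by (rule exI[of _ A]) (simp only: A(1) A(2) A3 simp_thms)
  qed
next
  case (Basis s)
  then obtain A where A: "A \<subseteq> S" "s = {p \<in> betaS S. A \<in> p}" by (elim CollectE exE conjE) simp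
  show ?case
  proof (rule basic_propI)
    show "s \<subseteq> betaS S" unfolding A(2) by (rule Collect_restrict)
    fix p assume "p \<in> s"
    then have "A \<in> p" unfolding A(2) by simp
    moreover have "{p \<in> betaS S. A \<in> p} \<subseteq> s" unfolding A(2) by (rule order_refl)
    ultimately show "\<exists>A. A \<subseteq> S \<and> A \<in> p \<and> {p \<in> betaS S. A \<in> p} \<subseteq> s" using A(1) by (intro exI[of _ A]) simp
  qed
qed

lemma beta_plus_mem: "A \<in> beta_plus S p q \<longleftrightarrow> A \<subseteq> S \<and> {x \<in> S. {s \<in> S. x + s \<in> A} \<in> q} \<in> p"
  unfolding beta_plus_def by simp

lemma beta_plus_uf:
  assumes cl: "\<forall>a\<in>S. \<forall>b\<in>S. a + b \<in> S"
    and p: "ultrafilter_on S p" and q: "ultrafilter_on S q"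
  shows "ultrafilter_on S (beta_plus S p q)"
proof (rule uf_intro)
  let ?T = "\<lambda>x A. {s \<in> S. x + s \<in> A}"
  show "\<And>A. A \<in> beta_plus S p q \<Longrightarrow> A \<subseteq> S" unfolding beta_plus_mem by simp
  have TS: "?T x S = S" if "x \<in> S" for x using cl that by auto
  have "{x \<in> S. ?T x S \<in> q} = S" using TS uf_S[OF q] by auto
  then show "S \<in> beta_plus S p q" unfolding beta_plus_mem using uf_S[OF p] by simp
  have e0: "{x \<in> S. ?T x {} \<in> q} = {}" using uf_empty[OF q] by auto
  show "{} \<notin> beta_plus S p q" unfolding beta_plus_mem e0 using uf_empty[OF p] by simp
next
  let ?T = "\<lambda>x A. {s \<in> S. x + s \<in> A}"
  fix A B
  assume A: "A \<in> beta_plus S p q" and B: "B \<in> beta_plus S p q"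
  have A1: "A \<subseteq> S" "{x \<in> S. ?T x A \<in> q} \<in> p" using A unfolding beta_plus_mem by simp_all
  have B1: "B \<subseteq> S" "{x \<in> S. ?T x B \<in> q} \<in> p" using B unfolding beta_plus_mem by simp_all
  have sub: "{x \<in> S. ?T x A \<in> q} \<inter> {x \<in> S. ?T x B \<in> q} \<subseteq> {x \<in> S. ?T x (A \<inter> B) \<in> q}"
  proof
    fix x assume x: "x \<in> {x \<in> S. ?T x A \<in> q} \<inter> {x \<in> S. ?T x B \<in> q}"
    then have "?T x A \<in> q" "?T x B \<in> q" "x \<in> S" by simp_all
    then have "?T x A \<inter> ?T x B \<in> q" using uf_int[OF q] by simp
    moreover have "?T x A \<inter> ?T x B = ?T x (A \<inter> B)" by auto
    ultimately show "x \<in> {x \<in> S. ?T x (A \<inter> B) \<in> q}" using \<open>x \<in> S\<close> by simp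
  qed
  have "{x \<in> S. ?T x A \<in> q} \<inter> {x \<in> S. ?T x B \<in> q} \<in> p" using uf_int[OF p A1(2) B1(2)] .
  then have "{x \<in> S. ?T x (A \<inter> B) \<in> q} \<in> p" using uf_mono[OF p _ sub] by simp
  moreover have "A \<inter> B \<subseteq> S" using A1(1) by auto
  ultimately show "A \<inter> B \<in> beta_plus S p q" unfolding beta_plus_mem by (intro conjI)
next
  let ?T = "\<lambda>x A. {s \<in> S. x + s \<in> A}"
  fix A B
  assume A: "A \<in> beta_plus S p q" and AB: "A \<subseteq> B" and BS: "B \<subseteq> S"
  have A1: "{x \<in> S. ?T x A \<in> q} \<in> p" using A unfolding beta_plus_mem by simp
  have sub: "{x \<in> S. ?T x A \<in> q} \<subseteq> {x \<in> S. ?T x B \<in> q}"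
  proof
    fix x assume x: "x \<in> {x \<in> S. ?T x A \<in> q}"
    then have xT: "?T x A \<in> q" "x \<in> S" by simp_all
    have "?T x A \<subseteq> ?T x B" using AB by auto
    then have "?T x B \<in> q" using uf_mono[OF q xT(1)] by simp
    then show "x \<in> {x \<in> S. ?T x B \<in> q}" using xT(2) by simp
  qed
  have "{x \<in> S. ?T x B \<in> q} \<in> p" using uf_mono[OF p A1 sub] by simp
  then show "B \<in> beta_plus S p q" unfolding beta_plus_mem using BS by simp
next
  let ?T = "\<lambda>x A. {s \<in> S. x + s \<in> A}"
  fix A assume AS: "A \<subseteq> S"
  let ?C = "{x \<in> S. ?T x A \<in> q}"
  show "A \<in> beta_plus S p q \<or> S - A \<in> beta_plus S p q"
  proof (cases "?C \<in> p")
    case True then show ?thesis unfolding beta_plus_mem using AS by simp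
  next
    case False
    have "?C \<subseteq> S" by auto
    then have c1: "S - ?C \<in> p" using uf_compl[OF p _ False] by simp
    have sub: "S - ?C \<subseteq> {x \<in> S. ?T x (S - A) \<in> q}"
    proof
      fix x assume x: "x \<in> S - ?C"
      then have xS: "x \<in> S" and nT: "?T x A \<notin> q" by simp_all
      have "?T x A \<subseteq> S" by auto
      then have "S - ?T x A \<in> q" using uf_compl[OF q _ nT] by simp
      moreover have "S - ?T x A = ?T x (S - A)" using xS cl by auto
      ultimately show "x \<in> {x \<in> S. ?T x (S - A) \<in> q}" using xS by simp
    qed
    have "{x \<in> S. ?T x (S - A) \<in> q} \<in> p" using uf_mono[OF p c1 sub] by simp
    then show ?thesis unfolding beta_plus_mem by simp
  qed
qed

lemma ideal_part:
  fixes S :: "'a::idom set"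
  assumes cl: "\<forall>a\<in>S. \<forall>b\<in>S. a + b \<in> S"
  shows "two_sided_ideal S (Jp_ultra S)"
  unfolding two_sided_ideal_def
proof (intro conjI ballI)
  show "Jp_ultra S \<subseteq> betaS S" unfolding Jp_ultra_def by auto
  fix p q assume pJ: "p \<in> Jp_ultra S" and qb: "q \<in> betaS S"
  have pu: "ultrafilter_on S p" and pX: "\<forall>X\<in>p. Jp_set S X" using pJ unfolding Jp_ultra_def betaS_def by auto
  have qu: "ultrafilter_on S q" using qb unfolding betaS_def by auto
  show "beta_plus S p q \<in> Jp_ultra S"
    unfolding Jp_ultra_def
  proof (intro CollectI conjI ballI)
    show "beta_plus S p q \<in> betaS S" using beta_plus_uf[OF cl pu qu] unfolding betaS_def by auto
    fix X assume X: "X \<in> beta_plus S p q"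
    let ?B = "{x \<in> S. {s \<in> S. x + s \<in> X} \<in> q}"
    have XS: "X \<subseteq> S" and Bp: "?B \<in> p" using X unfolding beta_plus_mem by simp_all
    have JB: "Jp_set S ?B" using pX Bp by (rule bspec)
    show "Jp_set S X" unfolding Jp_set_def
    proof (intro conjI allI impI XS)
      fix R :: "'a poly set" and L :: "(nat \<Rightarrow> 'a) set"
      assume RL: "finite R \<and> R \<noteq> {} \<and> R \<subseteq> integral_polys \<and> finite L \<and> L \<noteq> {} \<and> L \<subseteq> seqs_in S"
      obtain a H where aH: "a \<in> S" "finite H" "H \<noteq> {}" "H \<subseteq> {1..}" "SRL R L a H \<subseteq> ?B"
        using Jp_setD[OF JB RL] by (elim bexE exE conjE)
      let ?E = "(\<lambda>y. {s \<in> S. y + s \<in> X}) ` SRL R L a H"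
      have finSRL: "finite (SRL R L a H)"
      proof (rule finite_subset)
        show "SRL R L a H \<subseteq> (\<lambda>(f, g). a + poly f (\<Sum>t\<in>H. g t)) ` (R \<times> L)"
        proof
          fix y assume "y \<in> SRL R L a H"
          then obtain f g where fg: "f \<in> R" "g \<in> L" "y = a + poly f (\<Sum>t\<in>H. g t)"
            unfolding SRL_def by blast
          show "y \<in> (\<lambda>(f, g). a + poly f (\<Sum>t\<in>H. g t)) ` (R \<times> L)"
            by (rule image_eqI[of _ _ "(f, g)"]) (simp_all add: fg)
        qed
        show "finite ((\<lambda>(f, g). a + poly f (\<Sum>t\<in>H. g t)) ` (R \<times> L))" using RL by simp
      qed
      have Eq: "?E \<subseteq> q" using aH(5) by auto
      have "S \<inter> \<Inter>?E \<in> q" by (rule uf_inter_finite[OF qu _ Eq]) (use finSRL in simp)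
      moreover have "{} \<notin> q" using uf_empty[OF qu] .
      ultimately have "S \<inter> \<Inter>?E \<noteq> {}" by (intro uf_ne[OF qu])
      then obtain s where s0: "s \<in> S \<inter> \<Inter>?E" by (meson ex_in_conv)
      then have s: "s \<in> S" "\<And>y. y \<in> SRL R L a H \<Longrightarrow> y + s \<in> X" by auto
      have "SRL R L (a + s) H \<subseteq> X"
      proof
        fix z assume "z \<in> SRL R L (a + s) H"
        then obtain f g where fg: "f \<in> R" "g \<in> L" "z = a + s + poly f (\<Sum>t\<in>H. g t)"
          unfolding SRL_def by auto
        have "a + poly f (\<Sum>t\<in>H. g t) \<in> SRL R L a H" using fg unfolding SRL_def by auto
        then have "a + poly f (\<Sum>t\<in>H. g t) + s \<in> X" by (rule s(2))
        then show "z \<in> X" using fg by (simp add: algebra_simps)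
      qed
      moreover have "a + s \<in> S" using cl aH(1) s(1) by simp
      ultimately show "\<exists>a\<in>S. \<exists>H. finite H \<and> H \<noteq> {} \<and> H \<subseteq> {1..} \<and> SRL R L a H \<subseteq> X"
        using aH(2-4) by (intro bexI[of _ "a + s"] exI[of _ H] conjI) simp_all
    qed
  qed
  show "beta_plus S q p \<in> Jp_ultra S"
    unfolding Jp_ultra_def
  proof (intro CollectI conjI ballI)
    show "beta_plus S q p \<in> betaS S" using beta_plus_uf[OF cl qu pu] unfolding betaS_def by auto
    fix X assume X: "X \<in> beta_plus S q p"
    let ?B = "{x \<in> S. {s \<in> S. x + s \<in> X} \<in> p}"
    have XS: "X \<subseteq> S" and Bq: "?B \<in> q" using X unfolding beta_plus_mem by simp_all
    have "?B \<noteq> {}" using uf_ne[OF qu Bq] .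
    then obtain x where x: "x \<in> S" "{s \<in> S. x + s \<in> X} \<in> p" by auto
    have JB: "Jp_set S {s \<in> S. x + s \<in> X}" using pX x(2) by (rule bspec)
    show "Jp_set S X" unfolding Jp_set_def
    proof (intro conjI allI impI XS)
      fix R :: "'a poly set" and L :: "(nat \<Rightarrow> 'a) set"
      assume RL: "finite R \<and> R \<noteq> {} \<and> R \<subseteq> integral_polys \<and> finite L \<and> L \<noteq> {} \<and> L \<subseteq> seqs_in S"
      obtain a H where aH: "a \<in> S" "finite H" "H \<noteq> {}" "H \<subseteq> {1..}" "SRL R L a H \<subseteq> {s \<in> S. x + s \<in> X}"
        using Jp_setD[OF JB RL] by (elim bexE exE conjE)
      have "SRL R L (x + a) H \<subseteq> X"
      proof
        fix z assume "z \<in> SRL R L (x + a) H"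
        then obtain f g where fg: "f \<in> R" "g \<in> L" "z = x + a + poly f (\<Sum>t\<in>H. g t)"
          unfolding SRL_def by auto
        have "a + poly f (\<Sum>t\<in>H. g t) \<in> SRL R L a H" using fg unfolding SRL_def by auto
        then have "x + (a + poly f (\<Sum>t\<in>H. g t)) \<in> X" using aH(5) by auto
        then show "z \<in> X" using fg by (simp add: algebra_simps)
      qed
      moreover have "x + a \<in> S" using cl aH(1) x(1) by simp
      ultimately show "\<exists>a\<in>S. \<exists>H. finite H \<and> H \<noteq> {} \<and> H \<subseteq> {1..} \<and> SRL R L a H \<subseteq> X"
        using aH(2-4) by (intro bexI[of _ "x + a"] exI[of _ H] conjI) simp_all
    qed
  qed
qed

lemma compact_part:
  fixes S :: "'a::idom set"
  shows "compactin (beta_topology S) (Jp_ultra S)"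
proof -
  let ?bas = "\<lambda>A. {p \<in> betaS S. A \<in> p}"
  let ?K = "Jp_ultra S"
  have top: "topspace (beta_topology S) = betaS S"
  proof -
    have "?bas S = betaS S" unfolding betaS_def using uf_S by auto
    then show ?thesis unfolding beta_topology_def by auto
  qed
  show ?thesis unfolding compactin_def
  proof (intro conjI allI impI)
    show "?K \<subseteq> topspace (beta_topology S)" using top unfolding Jp_ultra_def by auto
    fix U assume U: "Ball U (openin (beta_topology S)) \<and> ?K \<subseteq> \<Union>U"
    have Uo: "basic_prop S u" if "u \<in> U" for u
    proof -
      have "openin (beta_topology S) u" using U that by simp
      then show ?thesis unfolding beta_topology_def openin_topology_generated_by_iff by (rule open_basic)
    qed
    show "\<exists>F. finite F \<and> F \<subseteq> U \<and> ?K \<subseteq> \<Union>F"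
    proof (rule ccontr)
      assume nf: "\<not> (\<exists>F. finite F \<and> F \<subseteq> U \<and> ?K \<subseteq> \<Union>F)"
      define G1 where "G1 = {S - A | A. A \<subseteq> S \<and> (\<exists>u\<in>U. ?bas A \<subseteq> u)}"
      define G2 where "G2 = {S - X | X. X \<subseteq> S \<and> \<not> Jp_set S X}"
      have GP: "G1 \<union> G2 \<subseteq> Pow S" unfolding G1_def G2_def by auto
      have "fipS S (G1 \<union> G2)" unfolding fipS_def
      proof (intro allI impI)
        fix E assume E: "finite E \<and> E \<subseteq> G1 \<union> G2"
        have "\<forall>e\<in>E \<inter> G1. \<exists>u. u \<in> U \<and> (\<exists>A. e = S - A \<and> A \<subseteq> S \<and> ?bas A \<subseteq> u)"
          unfolding G1_def by blast
        then obtain uf where uf: "\<And>e. e \<in> E \<inter> G1 \<Longrightarrow> uf e \<in> U \<and> (\<exists>A. e = S - A \<and> A \<subseteq> S \<and> ?bas A \<subseteq> uf e)"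
          by metis
        have fin1: "finite (uf ` (E \<inter> G1))" using E by auto
        have fin2: "uf ` (E \<inter> G1) \<subseteq> U" using uf by auto
        have nf': "\<And>F. finite F \<Longrightarrow> F \<subseteq> U \<Longrightarrow> \<not> ?K \<subseteq> \<Union>F" using nf by blast
        have "\<not> ?K \<subseteq> \<Union>(uf ` (E \<inter> G1))" by (rule nf'[OF fin1 fin2])
        then obtain p where p: "p \<in> ?K" "p \<notin> \<Union>(uf ` (E \<inter> G1))" by (meson subsetI)
        have pu: "ultrafilter_on S p" and pX: "\<forall>X\<in>p. Jp_set S X"
          using p unfolding Jp_ultra_def betaS_def by auto
        have "E \<subseteq> p"
        proof
          fix e assume e: "e \<in> E"
          show "e \<in> p"
          proof (cases "e \<in> G1")
            case True
            then have eG: "e \<in> E \<inter> G1" using e by blast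
            have ex: "\<exists>A. e = S - A \<and> A \<subseteq> S \<and> ?bas A \<subseteq> uf e" using uf[OF eG] by (rule conjunct2)
            then obtain A where A0: "e = S - A \<and> A \<subseteq> S \<and> ?bas A \<subseteq> uf e" by (rule exE)
            have A: "e = S - A" "A \<subseteq> S" "?bas A \<subseteq> uf e"
              using conjunct1[OF A0] conjunct1[OF conjunct2[OF A0]] conjunct2[OF conjunct2[OF A0]] by this+
            have "p \<notin> uf e" using p(2) eG by blast
            moreover have "p \<in> betaS S" using p(1) unfolding Jp_ultra_def by simp
            ultimately have "A \<notin> p" using A(3) by blast
            then show ?thesis using A(1) uf_compl[OF pu A(2)] by simp
          next
            case False
            then obtain X where X: "e = S - X" "X \<subseteq> S" "\<not> Jp_set S X" using e E unfolding G2_def by blast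
            then have "X \<notin> p" using pX by blast
            then show ?thesis using X(1) uf_compl[OF pu X(2)] by simp
          qed
        qed
        then have "S \<inter> \<Inter>E \<in> p" using uf_inter_finite[OF pu] E by blast
        then show "S \<inter> \<Inter>E \<noteq> {}" using uf_ne[OF pu] by simp
      qed
      then obtain q where q: "ultrafilter_on S q" "G1 \<union> G2 \<subseteq> q" using ultrafilter_exists[OF GP] by blast
      have qK: "q \<in> ?K" unfolding Jp_ultra_def betaS_def
      proof (intro CollectI conjI ballI q(1))
        fix X assume X: "X \<in> q"
        show "Jp_set S X"
        proof (rule ccontr)
          assume "\<not> Jp_set S X"
          moreover have "X \<subseteq> S" using uf_sub[OF q(1) X] .
          ultimately have "S - X \<in> q" using q unfolding G2_def by blast
          then have "X \<inter> (S - X) \<in> q" by (rule uf_int[OF q(1) X])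
          moreover have "X \<inter> (S - X) = {}" by auto
          ultimately show False using uf_empty[OF q(1)] by simp
        qed
      qed
      then obtain u where u: "u \<in> U" "q \<in> u" using U by blast
      obtain A where A: "A \<subseteq> S" "A \<in> q" "?bas A \<subseteq> u" using basic_propD2[OF Uo[OF u(1)] u(2)] .
      then have "S - A \<in> q" using u q unfolding G1_def by blast
      then have "A \<inter> (S - A) \<in> q" by (rule uf_int[OF q(1) A(2)])
      moreover have "A \<inter> (S - A) = {}" by auto
      ultimately show False using uf_empty[OF q(1)] by simp
    qed
  qed
qed

theorem lemma5p1:
  fixes S :: "'a::idom set"
  assumes "\<forall>a\<in>S. \<forall>b\<in>S. a + b \<in> S"
    and "diff_set S = UNIV"
    and "0 \<notin> S"
  shows "compactin (beta_topology S) (Jp_ultra S) \<and> two_sided_ideal S (Jp_ultra S)"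
  using compact_part ideal_part[OF assms(1)] by blast

end
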